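(* Let $K>1$ be real, $q\ge2$, and let $\mathbf{u}$ be a probability distribution on $[1:q]$. For all sufficiently large $n$, if $\mathbf{t}\in\mathcal{N}_{q,n}$ satisfies $|t_i-(n+1)u_i|\ge K\sqrt{n\log n}$ for some $i\in[1:q]$, then $$M_{n,\mathbf{u}}(\mathbf{t})\le n^{-\frac12(K^2-1)}.$$
   Context: $\mathcal{N}_{q,n}=\{\mathbf{t}\in\mathbb{Z}_{\ge0}^q:\sum_it_i=n\}$; $M_{n,\mathbf{u}}(\mathbf{t})=\frac{n!}{t_1!\cdots t_q!}\prod_iu_i^{t_i}$ (with $0^0=1$). Logarithms base 2. *)

theory Defs
  imports "HOL-Analysis.Analysis"
begin

definition types_set :: "nat \<Rightarrow> nat \<Rightarrow> (nat \<Rightarrow> nat) set" where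
  "types_set q n = {t. (\<forall>i. i \<notin> {1..q} \<longrightarrow> t i = 0) \<and> (\<Sum>i=1..q. t i) = n}"

definition multinom_prob :: "nat \<Rightarrow> nat \<Rightarrow> (nat \<Rightarrow> real) \<Rightarrow> (nat \<Rightarrow> nat) \<Rightarrow> real" where
  "multinom_prob q n u t = fact n / (\<Prod>i=1..q. fact (t i)) * (\<Prod>i=1..q. u i ^ t i)"

end

theory Submission
  imports Defs "HOL-Probability.Probability"
begin

lemma multinom_le_pow:
  fixes u :: "nat \<Rightarrow> real" and t :: "nat \<Rightarrow> nat"
  assumes "finite S" "\<And>j. j \<in> S \<Longrightarrow> u j \<ge> 0"
  shows "fact (\<Sum>j\<in>S. t j) / (\<Prod>j\<in>S. fact (t j)) * (\<Prod>j\<in>S. u j ^ t j)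
         \<le> (\<Sum>j\<in>S. u j) ^ (\<Sum>j\<in>S. t j)"
  using assms
proof (induction S rule: finite_induct)
  case empty
  then show ?case by simp
next
  case (insert a F)
  define m where "m = (\<Sum>j\<in>F. t j)"
  define P where "P = (\<Prod>j\<in>F. fact (t j) :: real)"
  define Q where "Q = (\<Prod>j\<in>F. u j ^ t j)"
  define s where "s = (\<Sum>j\<in>F. u j)"
  have P0: "P > 0" unfolding P_def by (intro prod_pos) auto
  have Q0: "Q \<ge> 0" unfolding Q_def using insert by (intro prod_nonneg) auto
  have s0: "s \<ge> 0" unfolding s_def using insert by (intro sum_nonneg) auto
  have ua: "u a \<ge> 0" using insert by auto
  have IH: "fact m / P * Q \<le> s ^ m" using insert unfolding m_def P_def Q_def s_def by auto
  have ff: "(fact (t a + m) :: real) = fact (t a) * fact m * of_nat ((t a + m) choose t a)"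
    using binomial_fact_lemma[of "t a" "t a + m"] by (metis add_diff_cancel_left' le_add1 of_nat_fact of_nat_mult)
  have "fact (t a + m) / (fact (t a) * P) * (u a ^ t a * Q)
        = of_nat ((t a + m) choose t a) * u a ^ t a * (fact m / P * Q)"
    unfolding ff using P0 by (simp add: field_simps)
  also have "\<dots> \<le> of_nat ((t a + m) choose t a) * u a ^ t a * s ^ m"
    using IH ua by (intro mult_left_mono) auto
  also have "\<dots> = of_nat ((t a + m) choose t a) * u a ^ t a * s ^ (t a + m - t a)" by simp
  also have "\<dots> \<le> (\<Sum>k\<le>t a + m. of_nat ((t a + m) choose k) * u a ^ k * s ^ (t a + m - k))"
    by (rule member_le_sum[where f = "\<lambda>k. of_nat ((t a + m) choose k) * u a ^ k * s ^ (t a + m - k)"])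
       (use ua s0 in auto)
  also have "\<dots> = (u a + s) ^ (t a + m)" by (rule binomial_ring[symmetric])
  finally show ?case using insert unfolding m_def P_def Q_def s_def by simp
qed

lemma multinom_le_binom:
  fixes u :: "nat \<Rightarrow> real"
  assumes u0: "\<And>i. i \<in> {1..q} \<Longrightarrow> u i \<ge> 0"
    and u1: "(\<Sum>i=1..q. u i) = 1"
    and t: "t \<in> types_set q n" and i: "i \<in> {1..q}"
  shows "multinom_prob q n u t \<le> real (n choose t i) * u i ^ t i * (1 - u i) ^ (n - t i)"
proof -
  define S where "S = {1..q} - {i}"
  have fS: "finite S" unfolding S_def by auto
  have eqS: "{1..q} = insert i S" "i \<notin> S" using i unfolding S_def by auto
  have tn: "(\<Sum>j=1..q. t j) = n" using t unfolding types_set_def by auto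
  have sumt: "t i + (\<Sum>j\<in>S. t j) = n" using tn eqS fS by (metis sum.insert)
  have sumu: "u i + (\<Sum>j\<in>S. u j) = 1" using u1 eqS fS by (metis sum.insert)
  define P where "P = (\<Prod>j\<in>S. fact (t j) :: real)"
  define Q where "Q = (\<Prod>j\<in>S. u j ^ t j)"
  define m where "m = (\<Sum>j\<in>S. t j)"
  have P0: "P > 0" unfolding P_def by (intro prod_pos) auto
  have ui: "u i \<ge> 0" using u0 i by auto
  have A: "fact m / P * Q \<le> (1 - u i) ^ m"
    using multinom_le_pow[OF fS, of u t] u0 sumu unfolding S_def P_def Q_def m_def
    by (smt (verit, ccfv_threshold) DiffD1 S_def)
  have ff: "(fact (t i + m) :: real) = fact (t i) * fact m * of_nat ((t i + m) choose t i)"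
    using binomial_fact_lemma[of "t i" "t i + m"] by (metis add_diff_cancel_left' le_add1 of_nat_fact of_nat_mult)
  have "multinom_prob q n u t = fact (t i + m) / (fact (t i) * P) * (u i ^ t i * Q)"
    unfolding multinom_prob_def eqS(1) using eqS(2) fS sumt
    by (simp add: prod.insert P_def Q_def m_def)
  also have "\<dots> = of_nat ((t i + m) choose t i) * u i ^ t i * (fact m / P * Q)"
    unfolding ff using P0 by (simp add: field_simps)
  also have "\<dots> \<le> of_nat ((t i + m) choose t i) * u i ^ t i * (1 - u i) ^ m"
    using A ui by (intro mult_left_mono) auto
  finally show ?thesis using sumt unfolding m_def by (metis add_diff_cancel_left')
qed

lemma binom_point_bound:
  fixes p :: real
  assumes p: "p \<in> {0..1}" and n: "n > 0"
  shows "real (n choose k) * p ^ k * (1 - p) ^ (n - k) \<le> 2 * exp (-2 * \<bar>real k - n * p\<bar>\<^sup>2 / n)"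
proof -
  interpret binomial_distribution n p using p by unfold_locales
  define e where "e = \<bar>real k - n * p\<bar>"
  have "real (n choose k) * p ^ k * (1 - p) ^ (n - k) = pmf (binomial_pmf n p) k"
    using p by simp
  also have "\<dots> = measure_pmf.prob (binomial_pmf n p) {k}" by (simp add: measure_pmf_single)
  also have "\<dots> \<le> measure_pmf.prob (binomial_pmf n p) {x. \<bar>real x - n * p\<bar> \<ge> e}"
    by (rule measure_pmf.finite_measure_mono) (auto simp: e_def)
  also have "\<dots> \<le> 2 * exp (-2 * e\<^sup>2 / n)"
    by (rule prob_abs_ge) (use n in \<open>auto simp: e_def\<close>)
  finally show ?thesis unfolding e_def .
qed

theorem corollary3:
  fixes K :: real and q :: nat and u :: "nat \<Rightarrow> real"
  assumes "K > 1" and "q \<ge> 2"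
    and "\<And>i. i \<in> {1..q} \<Longrightarrow> u i \<ge> 0"
    and "(\<Sum>i=1..q. u i) = 1"
  shows "\<forall>\<^sub>F n in sequentially. \<forall>t \<in> types_set q n.
           (\<exists>i\<in>{1..q}. \<bar>real (t i) - (real n + 1) * u i\<bar> \<ge> K * sqrt (real n * log 2 (real n)))
           \<longrightarrow> multinom_prob q n u t \<le> real n powr (- (K\<^sup>2 - 1) / 2)"
proof -
  have e2: "exp (2::real) \<le> 10"
  proof -
    have "exp (2::real) = exp 1 * exp 1" by (simp flip: exp_add)
    also have "\<dots> \<le> 3 * 3" using exp_le by (intro mult_mono) auto
    finally show ?thesis by simp
  qed
  have main: "multinom_prob q n u t \<le> real n powr (- (K\<^sup>2 - 1) / 2)"
    if n20: "n \<ge> 20" and t: "t \<in> types_set q n" and i: "i \<in> {1..q}"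
      and dev: "\<bar>real (t i) - (real n + 1) * u i\<bar> \<ge> K * sqrt (real n * log 2 (real n))"
    for n t i
  proof -
    define L where "L = log 2 (real n)"
    define a where "a = K * sqrt (real n * L)"
    define e where "e = \<bar>real (t i) - n * u i\<bar>"
    have n0: "real n > 0" using n20 by simp
    have ui0: "u i \<ge> 0" using assms(3) i by auto
    have ui1: "u i \<le> 1"
    proof -
      have "u i \<le> (\<Sum>j=1..q. u j)" using i assms(3) by (intro member_le_sum) auto
      then show ?thesis using assms(4) by simp
    qed
    have lnn: "ln (real n) \<ge> ln 2 + 2"
    proof -
      have "ln 2 + 2 = ln (2 * exp (2::real))" by (simp add: ln_mult)
      also have "\<dots> \<le> ln 20" using e2 by (subst ln_le_cancel_iff) auto
      also have "\<dots> \<le> ln (real n)" using n20 by (subst ln_le_cancel_iff) auto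
      finally show ?thesis .
    qed
    have ln2: "ln (2::real) > 0" "ln (2::real) \<le> 1" using ln_2_less_1 by auto
    have Lge: "L \<ge> ln (real n)"
    proof -
      have "L = ln (real n) / ln 2" unfolding L_def log_def by simp
      moreover have "ln (real n) \<ge> 0" using n20 by simp
      ultimately show ?thesis using ln2 by (simp add: le_divide_eq mult_left_le)
    qed
    have L1: "L \<ge> 1" using Lge lnn ln2 by linarith
    have nL1: "real n * L \<ge> 1"
    proof -
      have "1 * 1 \<le> real n * L" using L1 n20 by (intro mult_mono) auto
      then show ?thesis by simp
    qed
    have sq1: "sqrt (real n * L) \<ge> 1" using nL1 by simp
    have a1: "a \<ge> 1"
    proof -
      have "1 * 1 \<le> K * sqrt (real n * L)" using sq1 assms(1) by (intro mult_mono) auto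
      then show ?thesis unfolding a_def by simp
    qed
    have eqd: "real (t i) - (real n + 1) * u i = (real (t i) - real n * u i) - u i"
      by (simp add: algebra_simps)
    have "\<bar>real (t i) - (real n + 1) * u i\<bar> \<le> e + \<bar>u i\<bar>"
      unfolding eqd e_def by (rule abs_triangle_ineq4)
    then have ea: "e \<ge> a - 1" using dev ui1 ui0 unfolding a_def L_def by simp
    have asq: "a\<^sup>2 = K\<^sup>2 * (real n * L)" unfolding a_def using nL1 by (simp add: power_mult_distrib)
    have "e\<^sup>2 \<ge> (a - 1)\<^sup>2" using ea a1 by (intro power_mono) auto
    moreover have "(a - 1)\<^sup>2 \<ge> a\<^sup>2 / 2 - 1" 
    proof -
      have "0 \<le> (a - 2) * (a - 2)" by simp
      then show ?thesis unfolding power2_eq_square by (simp add: algebra_simps)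
    qed
    ultimately have e2a: "2 * e\<^sup>2 \<ge> K\<^sup>2 * (real n * L) - 2" using asq by linarith
    have e2': "2 * e\<^sup>2 / n \<ge> K\<^sup>2 * L - 2 / n"
    proof -
      have "K\<^sup>2 * L - 2 / n = (K\<^sup>2 * (real n * L) - 2) / n" using n0 by (simp add: field_simps)
      also have "\<dots> \<le> 2 * e\<^sup>2 / n" using e2a n0 by (intro divide_right_mono) auto
      finally show ?thesis .
    qed
    have K2: "K\<^sup>2 \<ge> 1" using assms(1) by (simp add: one_le_power)
    have "K\<^sup>2 * L \<ge> K\<^sup>2 * ln (real n)" using Lge K2 by (intro mult_left_mono) auto
    moreover have "2 / real n \<le> 2" using n20 by (simp add: field_simps)
    ultimately have ex0: "2 * e\<^sup>2 / n \<ge> K\<^sup>2 * ln (real n) - 2" using e2' by linarith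
    have "-2 * e\<^sup>2 / n = - (2 * e\<^sup>2 / n)" by simp
    then have ex: "-2 * e\<^sup>2 / n \<le> 2 - K\<^sup>2 * ln (real n)" using ex0 by linarith
    have "multinom_prob q n u t \<le> real (n choose t i) * u i ^ t i * (1 - u i) ^ (n - t i)"
      by (rule multinom_le_binom[OF assms(3,4) t i])
    also have "\<dots> \<le> 2 * exp (-2 * e\<^sup>2 / n)"
      unfolding e_def by (rule binom_point_bound) (use ui0 ui1 n20 in auto)
    also have "\<dots> \<le> 2 * exp (2 - K\<^sup>2 * ln (real n))" using ex by simp
    also have "\<dots> = exp (ln 2 + 2 - K\<^sup>2 * ln (real n))" by (simp add: exp_add exp_diff)
    also have "\<dots> \<le> exp (- (K\<^sup>2 - 1) / 2 * ln (real n))"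
    proof -
      have l0: "ln (real n) \<ge> 0" using n20 by simp
      have "1 * ln (real n) \<le> (K\<^sup>2 + 1) / 2 * ln (real n)"
        using K2 l0 by (intro mult_right_mono) auto
      moreover have "- (K\<^sup>2 - 1) / 2 * ln (real n) = (K\<^sup>2 + 1) / 2 * ln (real n) - K\<^sup>2 * ln (real n)"
        by (simp add: field_simps)
      ultimately have "ln 2 + 2 - K\<^sup>2 * ln (real n) \<le> - (K\<^sup>2 - 1) / 2 * ln (real n)"
        using lnn by linarith
      then show ?thesis by (subst exp_le_cancel_iff)
    qed
    also have "\<dots> = real n powr (- (K\<^sup>2 - 1) / 2)" using n0 by (simp add: powr_def)
    finally show ?thesis .
  qed
  show ?thesis
    using eventually_ge_at_top[of "20::nat"] by eventually_elim (use main in blast)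
qed

end
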